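(* Let $n$ be large, let $k$ be an integer with $1\le k\le 0.5\log n$, let $d=2\log 2n$, $\xi=e^{1/3}\cdot 2\log 2n$, and $\alpha_i=\prod_{j=1}^{i}\bigl(1+\tfrac{1}{k-j}\bigr)$ for $0\le i\le k-1$ (so $\alpha_0=1$). Consider the clustering sequence described in the context. For every $1\le i\le k-1$, if $|\mathcal{C}_{i-1}|\le \xi\,\alpha_{i-1}\,n^{1-(i-1)/k}$, then $\Pr\bigl[|\mathcal{C}_i|\ge \xi\,\alpha_i\,n^{1-i/k}\bigr]<0.5$. Moreover, $\xi\,\alpha_{k-1}\,n^{1/k}=O(k n^{1/k}\log n)$.
   Context: Logarithms are base 2. There is a graph on $n$ nodes and a sequence of clusterings $\mathcal{C}_0,\mathcal{C}_1,\dots$, where each clustering is a set of disjoint sets (clusters) of nodes, $\mathcal{C}_0=\{\{v\}: v\in V\}$, and for $1\le i\le k-1$ the clustering $\mathcal{C}_i$ is obtained from $\mathcal{C}_{i-1}$ by including each cluster $C\in\mathcal{C}_{i-1}$ in $\mathcal{C}_i$ with probability $n^{-1/k}$, where the inclusion events of the clusters of $\mathcal{C}_{i-1}$ are $d$-wise independent (any $d$ of them are mutually independent), conditioned on $\mathcal{C}_{i-1}$. *)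

theory Defs
  imports "HOL-Probability.Probability"
begin

definition sample_prob :: "nat \<Rightarrow> nat \<Rightarrow> real" where
  "sample_prob n k = real n powr (- 1 / real k)"

definition indep_deg :: "nat \<Rightarrow> real" where
  "indep_deg n = 2 * log 2 (2 * real n)"

definition xi :: "nat \<Rightarrow> real" where
  "xi n = exp (1/3) * (2 * log 2 (2 * real n))"

definition alpha :: "nat \<Rightarrow> nat \<Rightarrow> real" where
  "alpha k i = (\<Prod>j\<in>{1..i}. 1 + 1 / (real k - real j))"

text \<open>One sampling step: from the clustering A (a set of disjoint clusters of nodes
  of the n-node graph) the next clustering is drawn from P, a distribution on subsets
  of A, in which each cluster is kept with probability p and any at most d of the
  inclusion events are mutually independent.\<close>

definition sampling_step ::
  "nat \<Rightarrow> real \<Rightarrow> real \<Rightarrow> nat set set \<Rightarrow> nat set set pmf \<Rightarrow> bool" where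
  "sampling_step n p d A P \<longleftrightarrow>
     A \<subseteq> Pow {..<n} \<and> disjoint A \<and> set_pmf P \<subseteq> Pow A \<and>
     (\<forall>c\<in>A. measure_pmf.prob P {S. c \<in> S} = p) \<and>
     (\<forall>B\<subseteq>A. real (card B) \<le> d \<longrightarrow>
        prob_space.indep_events (measure_pmf P) (\<lambda>c. {S. c \<in> S}) B)"

end

theory Submission
  imports Defs
begin

lemma var_bound:
  fixes P :: "'a set pmf" and A :: "'a set" and p T :: real
  assumes fin: "finite A" and supp: "set_pmf P \<subseteq> Pow A"
  and p1: "\<And>c. c\<in>A \<Longrightarrow> measure_pmf.prob P {S. c\<in>S} = p"
  and p2: "\<And>c c'. c\<in>A \<Longrightarrow> c'\<in>A \<Longrightarrow> c\<noteq>c' \<Longrightarrow> measure_pmf.prob P {S. c\<in>S \<and> c'\<in>S} = p*p"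
  and T: "real (card A) * p < T"
  shows "measure_pmf.prob P {S. T \<le> real (card S)} \<le> real (card A) * (p - p*p) / (T - real (card A)*p)^2"
proof -
  define I where "I c S = (if c \<in> S then 1 else 0 :: real)" for c :: 'a and S
  define X where "X S = real (card S)" for S :: "'a set"
  have fs: "finite (set_pmf P)" by (rule finite_subset[OF supp]) (simp add: fin)
  have int: "\<And>f::'a set \<Rightarrow> real. integrable (measure_pmf P) f"
    by (rule integrable_measure_pmf_finite[OF fs])
  have E1: "measure_pmf.expectation P (I c) = p" if "c \<in> A" for c
  proof -
    have "I c = indicator {S. c \<in> S}" by (auto simp: I_def fun_eq_iff indicator_def)
    then show ?thesis using p1[OF that] by simp
  qed
  have E2: "measure_pmf.expectation P (\<lambda>S. I c S * I c' S) = (if c = c' then p else p*p)"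
    if "c \<in> A" "c' \<in> A" for c c'
  proof -
    have "(\<lambda>S. I c S * I c' S) = indicator {S. c \<in> S \<and> c' \<in> S}"
      by (auto simp: I_def fun_eq_iff indicator_def)
    then show ?thesis using p1[OF that(2)] p2[OF that] by (cases "c = c'") (simp_all add: Collect_mem_eq[symmetric])
  qed
  have cardsum: "X S = (\<Sum>c\<in>A. I c S)" if "S \<in> set_pmf P" for S
  proof -
    have "S \<subseteq> A" using that supp by auto
    then have "(\<Sum>c\<in>A. I c S) = (\<Sum>c\<in>S. 1)"
      unfolding I_def using fin by (simp add: sum.If_cases Int_absorb1 Int_commute)
    then show ?thesis by (simp add: X_def)
  qed
  have EX: "measure_pmf.expectation P X = real (card A) * p"
  proof -
    have "measure_pmf.expectation P X = measure_pmf.expectation P (\<lambda>S. \<Sum>c\<in>A. I c S)"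
      by (intro integral_cong_AE) (auto simp: AE_measure_pmf_iff cardsum)
    also have "\<dots> = (\<Sum>c\<in>A. measure_pmf.expectation P (I c))"
      by (simp add: int)
    also have "\<dots> = (\<Sum>c\<in>A. p)" using E1 by simp
    finally show ?thesis by simp
  qed
  have VX: "measure_pmf.variance P X = real (card A) * (p - p*p)"
  proof -
    have "measure_pmf.variance P X =
       measure_pmf.expectation P (\<lambda>S. \<Sum>c\<in>A. \<Sum>c'\<in>A. (I c S - p) * (I c' S - p))"
    proof (intro integral_cong_AE)
      show "AE S in measure_pmf P. (X S - measure_pmf.expectation P X)\<^sup>2 =
          (\<Sum>c\<in>A. \<Sum>c'\<in>A. (I c S - p) * (I c' S - p))"
        unfolding AE_measure_pmf_iff
      proof safe
        fix S assume "S \<in> set_pmf P"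
        then have "X S - measure_pmf.expectation P X = (\<Sum>c\<in>A. I c S - p)"
          by (simp add: cardsum EX sum_subtractf)
        then show "(X S - measure_pmf.expectation P X)\<^sup>2 =
          (\<Sum>c\<in>A. \<Sum>c'\<in>A. (I c S - p) * (I c' S - p))"
          by (simp add: power2_eq_square sum_product)
      qed
    qed auto
    also have "\<dots> = (\<Sum>c\<in>A. \<Sum>c'\<in>A. measure_pmf.expectation P (\<lambda>S. (I c S - p) * (I c' S - p)))"
      by (simp add: integral_sum int)
    also have "\<dots> = (\<Sum>c\<in>A. \<Sum>c'\<in>A. (if c = c' then p - p*p else 0))"
    proof (intro sum.cong refl)
      fix c c' assume cc: "c \<in> A" "c' \<in> A"
      have "(\<lambda>S. (I c S - p) * (I c' S - p)) = (\<lambda>S. I c S * I c' S - p * I c S - p * I c' S + p*p)"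
        by (auto simp: fun_eq_iff algebra_simps)
      then have "measure_pmf.expectation P (\<lambda>S. (I c S - p) * (I c' S - p)) =
         measure_pmf.expectation P (\<lambda>S. I c S * I c' S) - p * measure_pmf.expectation P (I c)
           - p * measure_pmf.expectation P (I c') + p*p"
        by (simp add: int)
      then show "measure_pmf.expectation P (\<lambda>S. (I c S - p) * (I c' S - p)) = (if c = c' then p - p*p else 0)"
        using E1[OF cc(1)] E1[OF cc(2)] E2[OF cc] by (auto simp: algebra_simps)
    qed
    also have "\<dots> = real (card A) * (p - p*p)"
      using fin by (simp add: sum.delta)
    finally show ?thesis .
  qed
  have "{S. T \<le> real (card S)} \<subseteq> {S \<in> space (measure_pmf P). T - real (card A) * p \<le> \<bar>X S - measure_pmf.expectation P X\<bar>}"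
    using T by (auto simp: EX X_def)
  then have "measure_pmf.prob P {S. T \<le> real (card S)} \<le>
      measure_pmf.prob P {S \<in> space (measure_pmf P). T - real (card A) * p \<le> \<bar>X S - measure_pmf.expectation P X\<bar>}"
    by (intro measure_pmf.finite_measure_mono) auto
  also have "\<dots> \<le> measure_pmf.variance P X / (T - real (card A) * p)^2"
    by (rule measure_pmf.Chebyshev_inequality) (use T in \<open>auto simp: int\<close>)
  finally show ?thesis by (simp add: VX)
qed

lemma alpha_closed: "j < k \<Longrightarrow> alpha k j = real k / (real k - real j)"
proof (induction j)
  case 0
  then show ?case by (simp add: alpha_def)
next
  case (Suc j)
  have "alpha k (Suc j) = alpha k j * (1 + 1 / (real k - real (Suc j)))"
    by (simp add: alpha_def prod.nat_ivl_Suc')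
  also have "\<dots> = real k / (real k - real j) * (1 + 1 / (real k - real (Suc j)))"
    using Suc by simp
  also have "\<dots> = real k / (real k - real (Suc j))"
  proof -
    define d where "d = real k - real (Suc j)"
    have d0: "d > 0" using Suc.prems by (simp add: d_def)
    have e: "real k - real j = d + 1" by (simp add: d_def)
    have f: "1 + 1 / d = (d + 1) / d" using d0 by (simp add: field_simps)
    have d1: "d + 1 \<noteq> 0" "d \<noteq> 0" using d0 by auto
    have "real k / (d + 1) * ((d + 1) / d) = real k / d" using d1 by simp
    then show ?thesis unfolding d_def[symmetric] e f .
  qed
  finally show ?case .
qed

lemma sq_lt_4pow: "real r ^ 2 < 4 ^ r"
proof -
  have "r < 2 ^ r" by (rule less_exp)
  then have "real r < real (2 ^ r)" by (simp only: of_nat_less_iff)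
  then have "real r < 2 ^ r" by simp
  then have "real r ^ 2 < (2 ^ r) ^ 2" by (intro power_strict_mono) auto
  also have "((2::real) ^ r) ^ 2 = 2 ^ (r * 2)" by (simp only: power_mult)
  also have "(2::real) ^ (r * 2) = (2 ^ 2) ^ r" by (simp only: mult.commute[of r 2] power_mult)
  also have "\<dots> = 4 ^ r" by simp
  finally show ?thesis .
qed

lemma part1:
  fixes n k i :: nat and A :: "nat set set" and P :: "nat set set pmf"
  assumes k1: "1 \<le> k" and kn: "real k \<le> 0.5 * log 2 (real n)" and i1: "1 \<le> i" and ik: "i \<le> k - 1"
    and ss: "sampling_step n (sample_prob n k) (indep_deg n) A P"
    and cA: "real (card A) \<le> xi n * alpha k (i - 1) * real n powr (1 - real (i - 1) / real k)"
  shows "measure_pmf.prob P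
                  {S. real (card S) \<ge> xi n * alpha k i * real n powr (1 - real i / real k)} < 0.5"
proof -
  define p where "p = sample_prob n k"
  define r where "r = real k - real i"
  define M where "M = xi n * alpha k (i - 1) * real n powr (r / real k)"
  define T where "T = xi n * alpha k i * real n powr (1 - real i / real k)"
  have ki: "i < k" using ik i1 by linarith
  have r1: "r \<ge> 1" using ki by (simp add: r_def)
  have kpos: "real k > 0" using k1 by simp
  have log2: "log 2 (real n) \<ge> 2" using kn k1 by simp
  have n4: "real n \<ge> 4"
  proof -
    have "real n > 0" using log2 by (cases "n = 0") (auto simp: log_def)
    then have "real n = 2 powr log 2 (real n)" by simp
    also have "\<dots> \<ge> 2 powr 2" using log2 by (intro powr_mono) auto
    finally show ?thesis by simp
  qed
  have npos: "real n > 0" using n4 by simp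
  have xi2: "xi n \<ge> 2"
  proof -
    have "log 2 (2 * real n) \<ge> 1" using n4 by simp
    moreover have "exp (1/3::real) \<ge> 1" by simp
    then have "exp (1/3::real) * (2 * log 2 (2 * real n)) \<ge> 1 * (2 * 1)"
      using \<open>log 2 (2 * real n) \<ge> 1\<close> by (intro mult_mono) auto
    then show ?thesis unfolding xi_def by simp
  qed
  have a1: "alpha k (i - 1) = real k / (r + 1)"
    using ki i1 by (subst alpha_closed) (auto simp: r_def of_nat_diff)
  have a2: "alpha k i = real k / r"
    using ki by (subst alpha_closed) (auto simp: r_def)
  have aM: "alpha k (i - 1) \<ge> 1"
  proof -
    have "r + 1 \<le> real k" using i1 by (simp add: r_def)
    then show ?thesis using a1 r1 by (simp add: le_divide_eq)
  qed
  have pow4: "real n powr (r / real k) \<ge> 4 powr r"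
  proof -
    have "real n \<ge> 2 powr (2 * real k)"
    proof -
      have "2 powr (2 * real k) \<le> 2 powr log 2 (real n)" using kn by (intro powr_mono) auto
      then show ?thesis using npos by simp
    qed
    moreover have "2 powr (2 * real k) = 4 powr real k"
      by (simp add: powr_powr[symmetric] powr_numeral)
    ultimately have "real n powr (r / real k) \<ge> (4 powr real k) powr (r / real k)"
      using r1 kpos by (intro powr_mono2) auto
    also have "(4 powr real k) powr (r / real k) = 4 powr r" using kpos by (simp add: powr_powr)
    finally show ?thesis .
  qed
  have rnat: "r = real (k - i)" using ki by (simp add: r_def of_nat_diff)
  have "4 powr r = 4 ^ (k - i)" by (simp add: rnat powr_realpow)
  then have "r ^ 2 < 4 powr r" using sq_lt_4pow[of "k - i"] by (simp add: rnat)
  then have rM: "2 * r ^ 2 < M"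
  proof -
    assume h: "r ^ 2 < 4 powr r"
    have "2 * r^2 < 2 * real n powr (r / real k)" using h pow4 by linarith
    also have "\<dots> \<le> xi n * alpha k (i - 1) * real n powr (r / real k)"
      using xi2 aM mult_mono[of 2 "xi n" 1 "alpha k (i - 1)"] by (intro mult_right_mono) auto
    finally show ?thesis by (simp add: M_def)
  qed
  have Mpos: "M > 0" using rM r1 by (smt (verit) zero_le_power2)
  have hp: "p = real n powr (- 1 / real k)" by (simp add: p_def sample_prob_def)
  have pM: "real (card A) * p \<le> M"
  proof -
    have "real (card A) * p \<le> xi n * alpha k (i - 1) * real n powr (1 - real (i - 1) / real k) * p"
      using cA by (intro mult_right_mono) (auto simp: hp)
    also have "\<dots> = M"
    proof -
      have "real n powr (1 - real (i - 1) / real k) * real n powr (- 1 / real k) = real n powr (r / real k)"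
      proof -
        have "1 - real (i - 1) / real k + (- 1 / real k) = r / real k"
          using i1 kpos by (simp add: r_def of_nat_diff field_simps)
        then show ?thesis by (simp add: powr_add[symmetric])
      qed
      then show ?thesis by (simp add: M_def hp)
    qed
    finally show ?thesis .
  qed
  have TM: "T = M * (1 + 1 / r)"
  proof -
    have "real n powr (1 - real i / real k) = real n powr (r / real k)"
      using kpos by (simp add: r_def field_simps)
    moreover have "alpha k i = alpha k (i - 1) * (1 + 1 / r)"
    proof -
      have "1 + 1 / r = (r + 1) / r" using r1 by (simp add: field_simps)
      moreover have "real k / (r + 1) * ((r + 1) / r) = real k / r" using r1 by simp
      ultimately show ?thesis unfolding a1 a2 by (metis times_divide_eq_right)
    qed
    ultimately show ?thesis by (simp add: T_def M_def)
  qed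
  have p01: "0 \<le> p" by (simp add: hp)
  have finA: "finite A" using ss by (auto simp: sampling_step_def intro: finite_subset[of A "Pow {..<n}"])
  have supp: "set_pmf P \<subseteq> Pow A" using ss by (simp add: sampling_step_def)
  have p1: "\<And>c. c\<in>A \<Longrightarrow> measure_pmf.prob P {S. c\<in>S} = p" using ss by (simp add: sampling_step_def p_def)
  have d2: "indep_deg n \<ge> 2" using n4 by (simp add: indep_deg_def)
  have p2: "measure_pmf.prob P {S. c\<in>S \<and> c'\<in>S} = p*p" if "c\<in>A" "c'\<in>A" "c\<noteq>c'" for c c'
  proof -
    have "real (card {c, c'}) \<le> indep_deg n" using that d2 by simp
    then have ie: "prob_space.indep_events (measure_pmf P) (\<lambda>c. {S. c \<in> S}) {c, c'}"
      using ss that by (simp add: sampling_step_def)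
    have "measure_pmf.prob P (\<Inter>j\<in>{c,c'}. {S. j \<in> S}) = (\<Prod>j\<in>{c,c'}. measure_pmf.prob P {S. j \<in> S})"
      using ie unfolding prob_space.indep_events_def[OF prob_space_measure_pmf] Collect_mem_eq by (metis (no_types) empty_not_insert finite.emptyI finite.insertI order_refl)
    moreover have "(\<Inter>j\<in>{c,c'}. {S. j \<in> S}) = {S. c\<in>S \<and> c'\<in>S}" by auto
    ultimately show ?thesis using that p1 by simp
  qed
  have TM2: "T = M + M / r" using TM by (simp add: algebra_simps)
  have "M / r > 0" using Mpos r1 by simp
  then have Tgt: "real (card A) * p < T" using pM TM2 by linarith
  have "measure_pmf.prob P {S. T \<le> real (card S)} \<le> real (card A) * (p - p*p) / (T - real (card A)*p)^2"
    by (rule var_bound[OF finA supp p1 p2 Tgt])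
  also have "\<dots> \<le> M / (M / r)^2"
  proof (rule frac_le)
    show "real (card A) * (p - p*p) \<le> M" using pM p01
      by (smt (verit) mult_left_mono of_nat_0_le_iff zero_le_square)
    show "0 \<le> M" using Mpos by simp
    show "0 < (M / r)^2" using Mpos r1 by simp
    have "M / r \<le> T - real (card A) * p" using pM TM2 by linarith
    then show "(M / r)^2 \<le> (T - real (card A)*p)^2" using Mpos r1 by (intro power_mono) auto
  qed
  also have "\<dots> = r^2 / M" using Mpos r1 by (simp add: field_simps power2_eq_square)
  also have "\<dots> < 0.5" using rM Mpos by (simp add: field_simps)
  finally show ?thesis by (simp add: T_def)
qed

lemma part2:
  fixes n k :: nat
  assumes n2: "n \<ge> 2" and k1: "1 \<le> k"
  shows "xi n * alpha k (k - 1) * real n powr (1 / real k)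
              \<le> (4 * exp (1/3)) * (real k * real n powr (1 / real k) * log 2 (real n))"
proof -
  have ak: "alpha k (k - 1) = real k" using k1 by (subst alpha_closed) (auto simp: of_nat_diff)
  have l1: "log 2 (real n) \<ge> 1" using n2 by simp
  have "log 2 (2 * real n) = 1 + log 2 (real n)" using n2 by (simp add: log_mult)
  then have "xi n \<le> 4 * exp (1/3) * log 2 (real n)" using l1 by (simp add: xi_def)
  then have "xi n * (real k * real n powr (1 / real k)) \<le> 4 * exp (1/3) * log 2 (real n) * (real k * real n powr (1 / real k))"
    by (intro mult_right_mono) auto
  then show ?thesis unfolding ak by (simp add: algebra_simps)
qed

theorem lemma8:
  shows "(\<exists>n0::nat. \<forall>n\<ge>n0. \<forall>k::nat. \<forall>i::nat. \<forall>A::nat set set. \<forall>P::nat set set pmf.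
            1 \<le> k \<and> real k \<le> 0.5 * log 2 (real n) \<and> 1 \<le> i \<and> i \<le> k - 1 \<and>
            sampling_step n (sample_prob n k) (indep_deg n) A P \<and>
            real (card A) \<le> xi n * alpha k (i - 1) * real n powr (1 - real (i - 1) / real k)
            \<longrightarrow> measure_pmf.prob P
                  {S. real (card S) \<ge> xi n * alpha k i * real n powr (1 - real i / real k)} < 0.5)
       \<and> (\<exists>C::real. \<exists>n0::nat. \<forall>n\<ge>n0. \<forall>k::nat.
            1 \<le> k \<and> real k \<le> 0.5 * log 2 (real n) \<longrightarrow>
            xi n * alpha k (k - 1) * real n powr (1 / real k)
              \<le> C * (real k * real n powr (1 / real k) * log 2 (real n)))"
proof (intro conjI)
  show "\<exists>n0::nat. \<forall>n\<ge>n0. \<forall>k::nat. \<forall>i::nat. \<forall>A::nat set set. \<forall>P::nat set set pmf.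
            1 \<le> k \<and> real k \<le> 0.5 * log 2 (real n) \<and> 1 \<le> i \<and> i \<le> k - 1 \<and>
            sampling_step n (sample_prob n k) (indep_deg n) A P \<and>
            real (card A) \<le> xi n * alpha k (i - 1) * real n powr (1 - real (i - 1) / real k)
            \<longrightarrow> measure_pmf.prob P
                  {S. real (card S) \<ge> xi n * alpha k i * real n powr (1 - real i / real k)} < 0.5"
    using part1 by blast
  show "\<exists>C::real. \<exists>n0::nat. \<forall>n\<ge>n0. \<forall>k::nat.
            1 \<le> k \<and> real k \<le> 0.5 * log 2 (real n) \<longrightarrow>
            xi n * alpha k (k - 1) * real n powr (1 / real k)
              \<le> C * (real k * real n powr (1 / real k) * log 2 (real n))"
    using part2 by blast
qed

end
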